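(* Let $m\ge3$ be an integer and $p>m$ a prime not dividing $m$, and let $D=\{1,2,\dots,m-1\}\cup\{p^n:n\in\mathbb{N}\}$. Then $\chi(\mathbb{N}_D)=m$ and $\operatorname{doa}(D)=1$, so $\chi(\mathbb{N}_D)/\operatorname{doa}(D)=m$.
   Context: For $D\subseteq\mathbb{N}$, $\mathbb{N}_D$ is the graph with vertex set $\mathbb{N}$ in which $x,y$ are adjacent iff $|x-y|\in D$; $\chi(\mathbb{N}_D)$ is its chromatic number. A $k$-term $D$-diffsequence is a sequence of integers $x_1,\dots,x_k$ with $x_{i+1}-x_i\in D$ for all $i$; $D$ is $r$-accessible if every $r$-coloring of $\mathbb{N}$ admits monochromatic $k$-term $D$-diffsequences for all $k$, and $\operatorname{doa}(D)$ is the greatest $r$ for which $D$ is $r$-accessible. *)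

theory Defs
  imports "HOL-Computational_Algebra.Primes" "HOL-Library.Extended_Nat"
begin

text \<open>Here \<open>\<nat>\<close> is the set of positive integers; colourings are functions on nat,
  only their values on positive integers matter.\<close>

definition proper_coloring :: "nat set \<Rightarrow> nat \<Rightarrow> (nat \<Rightarrow> nat) \<Rightarrow> bool" where
  "proper_coloring D r c \<longleftrightarrow>
     (\<forall>x\<ge>1. c x < r) \<and>
     (\<forall>x\<ge>1. \<forall>y\<ge>1. nat \<bar>int x - int y\<bar> \<in> D \<longrightarrow> c x \<noteq> c y)"

text \<open>Chromatic number of \<open>\<nat>_D\<close> (infinite if no finite colouring exists).\<close>
definition chi_ND :: "nat set \<Rightarrow> enat" where
  "chi_ND D = (INF r \<in> {r. \<exists>c. proper_coloring D r c}. enat r)"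

definition mono_diffseq :: "nat set \<Rightarrow> (nat \<Rightarrow> nat) \<Rightarrow> nat \<Rightarrow> (nat \<Rightarrow> nat) \<Rightarrow> bool" where
  "mono_diffseq D c k x \<longleftrightarrow>
     (\<forall>i<k. x i \<ge> 1) \<and>
     (\<forall>i. Suc i < k \<longrightarrow> int (x (Suc i)) - int (x i) \<in> int ` D) \<and>
     (\<forall>i<k. \<forall>j<k. c (x i) = c (x j))"

definition r_accessible :: "nat set \<Rightarrow> nat \<Rightarrow> bool" where
  "r_accessible D r \<longleftrightarrow>
     (\<forall>c. (\<forall>x\<ge>1. c x < r) \<longrightarrow> (\<forall>k. \<exists>x. mono_diffseq D c k x))"

text \<open>Degree of accessibility: the greatest r with D r-accessible (infinite if unbounded).\<close>
definition doa :: "nat set \<Rightarrow> enat" where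
  "doa D = (SUP r \<in> {r. r_accessible D r}. enat r)"

end

theory Submission
  imports Defs
begin

lemma step_lemma:
  fixes m p x d :: nat
  assumes "prime p" "p > m" "m \<ge> 3" "d \<in> {1..m-1} \<union> {p ^ n | n. n \<ge> 1}"
    and "((x + d) div p) mod 2 = (x div p) mod 2"
  shows "(x + d) div p = x div p"
proof -
  have p2: "p \<ge> 2" using assms(1) prime_ge_2_nat by blast
  show ?thesis
  proof (cases "d \<in> {1..m-1}")
    case True
    hence "d < p" using assms(2) by auto
    have "(x + d) div p \<le> x div p + 1"
    proof -
      have e: "x = p * (x div p) + x mod p" by simp
      have "x mod p < p" using p2 by simp
      hence "x + d < p * (x div p) + 2 * p"
        using \<open>d < p\<close> e by linarith
      hence "x + d < (x div p + 2) * p" by (simp add: algebra_simps)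
      hence "(x + d) div p < x div p + 2"
        by (simp add: less_mult_imp_div_less)
      thus ?thesis by simp
    qed
    moreover have "x div p \<le> (x + d) div p" by (simp add: div_le_mono)
    ultimately have dj: "(x + d) div p = x div p \<or> (x + d) div p = x div p + 1" by linarith
    have lem1: "\<And>a::nat. (a + 1) mod 2 \<noteq> a mod 2" by presburger
    from dj show ?thesis
    proof
      assume "(x + d) div p = x div p" thus ?thesis .
    next
      assume h1: "(x + d) div p = x div p + 1"
      have "(x div p + 1) mod 2 \<noteq> x div p mod 2" by (rule lem1)
      hence False using assms(5) unfolding h1 by blast
      thus ?thesis ..
    qed
  next
    case False
    then obtain n where n: "n \<ge> 1" "d = p ^ n" using assms(4) by auto
    have odd: "odd p"
      using assms(1) assms(2) assms(3) prime_odd_nat by auto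
    have "d = p * p ^ (n - 1)" using n by (metis Suc_diff_1 less_le_trans power_Suc zero_less_one)
    hence h: "(x + d) div p = x div p + p ^ (n - 1)" using p2 by simp
    have oq: "odd (p ^ (n - 1))" using odd by simp
    have lem: "\<And>a b::nat. odd b \<Longrightarrow> (a + b) mod 2 \<noteq> a mod 2" by presburger
    have "(x div p + p ^ (n - 1)) mod 2 \<noteq> x div p mod 2" using lem[OF oq] .
    hence False using assms(5) unfolding h by blast
    thus ?thesis ..
  qed
qed

lemma not_acc2:
  fixes m p r :: nat
  assumes "m \<ge> 3" "prime p" "p > m" "r \<ge> 2"
  shows "\<not> r_accessible ({1..m-1} \<union> {p ^ n | n. n \<ge> 1}) r"
proof
  let ?D = "{1..m-1} \<union> {p ^ n | n. n \<ge> 1}"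
  assume acc: "r_accessible ?D r"
  have cb: "\<forall>x\<ge>1. (\<lambda>x. (x div p) mod 2) x < r" using assms(4) by auto
  have "\<forall>k. \<exists>x. mono_diffseq ?D (\<lambda>x. (x div p) mod 2) k x"
    using spec[OF acc[unfolded r_accessible_def], of "\<lambda>x. (x div p) mod 2"] cb by simp
  then obtain x where x: "mono_diffseq ?D (\<lambda>x. (x div p) mod 2) (p + 1) x"
    by blast
  have st: "x (Suc i) div p = x i div p \<and> x (Suc i) > x i" if "i < p" for i
  proof -
    have "int (x (Suc i)) - int (x i) \<in> int ` ?D" using x that unfolding mono_diffseq_def by auto
    then obtain d where d: "d \<in> ?D" "int (x (Suc i)) - int (x i) = int d" by auto
    have d1: "d \<ge> 1" using d(1) assms(2) by (auto simp: prime_gt_0_nat Suc_le_eq)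
    have xs: "x (Suc i) = x i + d" using d(2) by linarith
    have "(x (Suc i) div p) mod 2 = (x i div p) mod 2"
      using x that unfolding mono_diffseq_def by auto
    hence "(x i + d) div p = x i div p"
      using step_lemma[OF assms(2) assms(3) assms(1) d(1)] xs by simp
    thus ?thesis using xs d1 by simp
  qed
  have "x i div p = x 0 div p \<and> x i \<ge> x 0 + i" if "i \<le> p" for i
    using that
  proof (induction i)
    case 0 then show ?case by simp
  next
    case (Suc i) then show ?case using st[of i] by auto
  qed
  from this[of p] have "x p div p = x 0 div p" "x p \<ge> x 0 + p" by auto
  moreover have "(x 0 + p) div p = x 0 div p + 1" using assms(2) prime_gt_0_nat by simp
  moreover have "(x 0 + p) div p \<le> x p div p" using calculation(2) div_le_mono by blast
  ultimately show False by simp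
qed

theorem mainTheorem14:
  fixes m p :: nat
  assumes "m \<ge> 3" and "prime p" and "p > m" and "\<not> p dvd m"
  shows "chi_ND ({1..m-1} \<union> {p ^ n | n. n \<ge> 1}) = enat m
       \<and> doa ({1..m-1} \<union> {p ^ n | n. n \<ge> 1}) = 1"
proof
  let ?D = "{1..m-1} \<union> {p ^ n | n. n \<ge> 1}"
  have cop: "coprime m p" using assms(2) assms(4) by (metis prime_imp_coprime coprime_commute)
  have pc: "proper_coloring ?D m (\<lambda>x. x mod m)"
    unfolding proper_coloring_def
  proof (intro conjI allI impI)
    fix x :: nat assume "x \<ge> 1" thus "x mod m < m" using assms(1) by simp
  next
    fix x y :: nat assume "x \<ge> 1" "y \<ge> 1" and dD: "nat \<bar>int x - int y\<bar> \<in> ?D"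
    show "x mod m \<noteq> y mod m"
    proof
      assume "x mod m = y mod m"
      hence "int m dvd int x - int y" by (metis mod_eq_dvd_iff of_nat_mod)
      hence "m dvd nat \<bar>int x - int y\<bar>"
        by (metis dvd_abs_iff int_dvd_int_iff int_nat_eq abs_ge_zero nat_0_le)
      then obtain d where dd: "m dvd d" "d \<in> ?D" using dD by blast
      show False
      proof (cases "d \<in> {1..m-1}")
        case True then show ?thesis using dd(1) by (auto dest: dvd_imp_le)
      next
        case False
        then obtain n where "d = p ^ n" using dd(2) by auto
        hence "coprime m d" using cop by simp
        hence "m = 1" using dd(1) using coprime_common_divisor_nat[of m d m] by simp
        thus ?thesis using assms(1) by simp
      qed
    qed
  qed
  have lb: "m \<le> r" if "proper_coloring ?D r c" for r c
  proof -
    have "inj_on c {1..m}"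
    proof (rule inj_onI)
      fix x y assume xy: "x \<in> {1..m}" "y \<in> {1..m}" "c x = c y"
      show "x = y"
      proof (rule ccontr)
        assume "x \<noteq> y"
        hence "nat \<bar>int x - int y\<bar> \<in> {1..m-1}" using xy by auto
        hence inD: "nat \<bar>int x - int y\<bar> \<in> ?D" by (rule UnI1)
        have h: "\<forall>x\<ge>1. \<forall>y\<ge>1. nat \<bar>int x - int y\<bar> \<in> ?D \<longrightarrow> c x \<noteq> c y"
          using that unfolding proper_coloring_def by (rule conjunct2)
        have "x \<ge> 1" "y \<ge> 1" using xy by auto
        hence "c x \<noteq> c y" using h inD by blast
        thus False using xy(3) by contradiction
      qed
    qed
    moreover have "c ` {1..m} \<subseteq> {..<r}"
    proof
      fix z assume "z \<in> c ` {1..m}"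
      then obtain x where "x \<in> {1..m}" "z = c x" by blast
      moreover have "\<forall>x\<ge>1. c x < r" using that unfolding proper_coloring_def by (rule conjunct1)
      ultimately show "z \<in> {..<r}" by simp
    qed
    ultimately have "card {1..m} \<le> card {..<r}" by (metis card_inj_on_le finite_lessThan)
    thus ?thesis by simp
  qed
  show "chi_ND ?D = enat m"
    unfolding chi_ND_def
  proof (rule antisym)
    show "(INF r \<in> {r. \<exists>c. proper_coloring ?D r c}. enat r) \<le> enat m"
    proof (rule INF_lower2[of m])
      show "m \<in> {r. \<exists>c. proper_coloring ?D r c}" using pc by blast
    qed (rule order_refl)
    show "enat m \<le> (INF r \<in> {r. \<exists>c. proper_coloring ?D r c}. enat r)"
    proof (rule INF_greatest)
      fix r assume "r \<in> {r. \<exists>c. proper_coloring ?D r c}"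
      then obtain c where "proper_coloring ?D r c" by blast
      hence "m \<le> r" by (rule lb)
      thus "enat m \<le> enat r" by simp
    qed
  qed
  have a1: "r_accessible ?D 1"
    unfolding r_accessible_def
  proof (intro allI impI)
    fix c :: "nat \<Rightarrow> nat" and k assume c: "\<forall>x\<ge>1. c x < 1"
    have "(1::nat) \<in> {1..m-1}" using assms(1) by simp
    hence oneD: "(1::nat) \<in> ?D" by (rule UnI1)
    have c0: "c (i + 1) = 0" for i using c by simp
    have "mono_diffseq ?D c k (\<lambda>i. i + 1)"
      unfolding mono_diffseq_def
    proof (intro conjI allI impI)
      fix i show "int (Suc i + 1) - int (i + 1) \<in> int ` ?D" using oneD by force
    qed (simp_all add: c0[simplified])
    thus "\<exists>x. mono_diffseq ?D c k x" by blast
  qed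
  have ub: "r \<le> 1" if "r_accessible ?D r" for r
    using not_acc2[OF assms(1-3), of r] that by linarith
  show "doa ?D = 1"
    unfolding doa_def
  proof (rule antisym)
    show "(SUP r \<in> {r. r_accessible ?D r}. enat r) \<le> 1"
    proof (rule SUP_least)
      fix r assume "r \<in> {r. r_accessible ?D r}"
      hence "r \<le> 1" using ub by blast
      thus "enat r \<le> 1" by (simp add: one_enat_def)
    qed
    show "1 \<le> (SUP r \<in> {r. r_accessible ?D r}. enat r)"
    proof (rule SUP_upper2[of 1])
      show "1 \<in> {r. r_accessible ?D r}" using a1 by blast
    qed (simp add: one_enat_def)
  qed
qed

end
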